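(* Let $\ell\ge2$, $r_0,\dots,r_\ell\ge1$ integers, $d_0,\dots,d_\ell$ integers with $d_V=\sum_kd_k=0$, $\mathbf{g}\ge1$ an integer. For real $c>\max_k\mu_k$ let $(a_0,a_2,\dots,a_\ell)$ be the unique solution of the linear system in the context, and put $\Sigma_1(c)=\sum_{j=2}^\ell a_jr_j$, $\Sigma_2(c)=\sum_{j=2}^\ell a_jd_j$. Then, as $c\to+\infty$, $\Sigma_1$ and $\Sigma_2$ have expansions $\Sigma_1=\sum_{i\ge1}u_ic^{-i}$, $\Sigma_2=\sum_{i\ge1}v_ic^{-i}$, and with $\mu_{01}=\frac{d_0+d_1}{r_0+r_1}$ the coefficients satisfy $u_1=4r_V^2\mu_{01}$, $(r_V+2)u_2-2\mu_{01}u_1-2v_1=4(r_V+2)(\mathbf{g}-1)r_V\mu_{01}$, and for all $i\ge1$: $(r_V+2)u_{i+2}-2\mu_{01}u_{i+1}-2v_{i+1}+\frac{r_V+2}{r_V+1}\mu_{01}v_i=0$.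
   Context: $\mu_k=d_k/r_k$, $r_V=\sum_kr_k$, $\pi_R=\prod_k(r_k-1)!$. For $1\le j\ne k\le\ell$: $\alpha_0=\frac{\pi_R}{r_V!}(cr_V-d_V)$, $\alpha_j=\frac{\pi_R}{(r_V+1)!}r_j(c(r_V+1)-d_V-\mu_j)$, $\alpha_{jk}=\frac{\pi_R}{(r_V+2)!}r_jr_k(c(r_V+2)-d_V-\mu_j-\mu_k)$, $\alpha_{jj}=\frac{\pi_R}{(r_V+2)!}r_j(r_j+1)(c(r_V+2)-d_V-2\mu_j)$, $\beta_0=\frac{\pi_R}{(r_V-1)!}((r_V-1)r_Vc+2(1-\mathbf{g})-(r_V-1)d_V)$, $\beta_j=\frac{\pi_Rr_j}{r_V!}(r_V(r_V-1)c+2(1-\mathbf{g})-d_V(r_V-2)-r_V\mu_j)$. The linear system for $(a_0,a_2,\dots,a_\ell)$ is: $a_0\alpha_k+\sum_{j=2}^\ell a_j\alpha_{jk}=2\beta_k$ for $k=2,\dots,\ell$, and $a_0\alpha_0+\sum_{j=2}^\ell a_j\alpha_j=2\beta_0$. *)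

theory Defs
  imports Complex_Main
begin

definition mu :: "(nat \<Rightarrow> nat) \<Rightarrow> (nat \<Rightarrow> int) \<Rightarrow> nat \<Rightarrow> real" where
  "mu r d k = real_of_int (d k) / real (r k)"

definition rV :: "nat \<Rightarrow> (nat \<Rightarrow> nat) \<Rightarrow> nat" where
  "rV l r = (\<Sum>k\<le>l. r k)"

definition dV :: "nat \<Rightarrow> (nat \<Rightarrow> int) \<Rightarrow> int" where
  "dV l d = (\<Sum>k\<le>l. d k)"

definition piR :: "nat \<Rightarrow> (nat \<Rightarrow> nat) \<Rightarrow> real" where
  "piR l r = (\<Prod>k\<le>l. fact (r k - 1))"

definition alpha0 :: "nat \<Rightarrow> (nat \<Rightarrow> nat) \<Rightarrow> (nat \<Rightarrow> int) \<Rightarrow> real \<Rightarrow> real" where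
  "alpha0 l r d c = piR l r / fact (rV l r) * (c * real (rV l r) - real_of_int (dV l d))"

definition alpha1 :: "nat \<Rightarrow> (nat \<Rightarrow> nat) \<Rightarrow> (nat \<Rightarrow> int) \<Rightarrow> real \<Rightarrow> nat \<Rightarrow> real" where
  "alpha1 l r d c j = piR l r / fact (rV l r + 1) * real (r j) *
     (c * (real (rV l r) + 1) - real_of_int (dV l d) - mu r d j)"

definition alpha2 :: "nat \<Rightarrow> (nat \<Rightarrow> nat) \<Rightarrow> (nat \<Rightarrow> int) \<Rightarrow> real \<Rightarrow> nat \<Rightarrow> nat \<Rightarrow> real" where
  "alpha2 l r d c j k =
     (if j \<noteq> k then
        piR l r / fact (rV l r + 2) * real (r j) * real (r k) *
          (c * (real (rV l r) + 2) - real_of_int (dV l d) - mu r d j - mu r d k)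
      else
        piR l r / fact (rV l r + 2) * real (r j) * (real (r j) + 1) *
          (c * (real (rV l r) + 2) - real_of_int (dV l d) - 2 * mu r d j))"

definition beta0 :: "nat \<Rightarrow> (nat \<Rightarrow> nat) \<Rightarrow> (nat \<Rightarrow> int) \<Rightarrow> int \<Rightarrow> real \<Rightarrow> real" where
  "beta0 l r d g c = piR l r / fact (rV l r - 1) *
     ((real (rV l r) - 1) * real (rV l r) * c + 2 * (1 - real_of_int g)
      - (real (rV l r) - 1) * real_of_int (dV l d))"

definition beta1 :: "nat \<Rightarrow> (nat \<Rightarrow> nat) \<Rightarrow> (nat \<Rightarrow> int) \<Rightarrow> int \<Rightarrow> real \<Rightarrow> nat \<Rightarrow> real" where
  "beta1 l r d g c j = piR l r * real (r j) / fact (rV l r) *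
     (real (rV l r) * (real (rV l r) - 1) * c + 2 * (1 - real_of_int g)
      - real_of_int (dV l d) * (real (rV l r) - 2) - real (rV l r) * mu r d j)"

text \<open>\<open>a 0\<close> is \<open>a\<^sub>0\<close>, \<open>a j\<close> for \<open>j = 2..l\<close> are the other unknowns (\<open>a 1\<close> unused).\<close>
definition solves_system ::
  "nat \<Rightarrow> (nat \<Rightarrow> nat) \<Rightarrow> (nat \<Rightarrow> int) \<Rightarrow> int \<Rightarrow> real \<Rightarrow> (nat \<Rightarrow> real) \<Rightarrow> bool" where
  "solves_system l r d g c a \<longleftrightarrow>
     (\<forall>k\<in>{2..l}. a 0 * alpha1 l r d c k + (\<Sum>j=2..l. a j * alpha2 l r d c j k)
                   = 2 * beta1 l r d g c k) \<and>
     a 0 * alpha0 l r d c + (\<Sum>j=2..l. a j * alpha1 l r d c j) = 2 * beta0 l r d g c"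

end

theory Submission
  imports Defs "HOL-Analysis.Analysis"
begin

definition phif :: "nat set \<Rightarrow> (nat \<Rightarrow> real) \<Rightarrow> (nat \<Rightarrow> real) \<Rightarrow> real \<Rightarrow> real \<Rightarrow> real" where
  "phif K rr mm R x = (\<Sum>k\<in>K. rr k * inverse ((R+2) - 2*mm k * x))"
definition PHI :: "nat set \<Rightarrow> (nat \<Rightarrow> real) \<Rightarrow> (nat \<Rightarrow> real) \<Rightarrow> real \<Rightarrow> real fps" where
  "PHI K rr mm R = (\<Sum>k\<in>K. fps_const (rr k) * inverse (fps_const (R+2) - fps_const (2*mm k) * fps_X))"

lemma PHI_exp: "finite K \<Longrightarrow> R + 2 \<noteq> 0 \<Longrightarrow> phif K rr mm R has_fps_expansion PHI K rr mm R"
proof -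
  assume K: "finite K" and R: "R + 2 \<noteq> 0"
  have "(\<lambda>x. \<Sum>k\<in>K. rr k * inverse ((R+2) - 2*mm k * x)) has_fps_expansion PHI K rr mm R"
    unfolding PHI_def using R
    by (intro has_fps_expansion_sum has_fps_expansion_cmult_left has_fps_expansion_inverse
          has_fps_expansion_diff has_fps_expansion_const has_fps_expansion_fps_X) auto
  thus ?thesis by (simp add: phif_def[abs_def])
qed

lemma PHI_0: "finite K \<Longrightarrow> R + 2 \<noteq> 0 \<Longrightarrow> fps_nth (PHI K rr mm R) 0 = (\<Sum>k\<in>K. rr k) / (R+2)"
  unfolding PHI_def by (simp add: fps_sum_nth sum_divide_distrib field_simps)

lemma analytic:
  fixes R \<rho> m G p1 :: real and K :: "nat set" and rr dd mm :: "nat \<Rightarrow> real"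
  defines "phi \<equiv> phif K rr mm R" and "psi \<equiv> phif K (\<lambda>k. 2 * dd k / (R+2)) mm R"
  defines "A1 \<equiv> fps_const ((R+2)*\<rho>) - fps_const (R^2) * PHI K rr mm R"
      and "B1 \<equiv> fps_const (-4*R*(R+1)*(R+2)^2) * (fps_const R + fps_const (G-1) * fps_X) * PHI K (\<lambda>k. 2 * dd k / (R+2)) mm R"
      and "P2 \<equiv> fps_const (R+1) * (fps_const (R+2) - fps_const (2*m) * fps_X)"
      and "A2 \<equiv> fps_const (-2*(R+1)) + fps_const ((R+2)*m) * fps_X"
      and "E2 \<equiv> fps_const (4*R*(R+1)*(R+2)*m) * (fps_const R + fps_const (G-1) * fps_X)"
  defines "Coef \<equiv> fps_const p1 * A2 - P2 * A1"
      and "Enum \<equiv> fps_const p1 * E2 - P2 * B1"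
  defines "FZ \<equiv> Enum * inverse Coef"
  defines "FY \<equiv> fps_const (1/p1) * fps_X * (B1 - A1 * FZ)"
  assumes K: "finite K" and R: "R > 0" and p1: "p1 = 2*(R+1)*(R-\<rho>)" and Rr: "R - \<rho> > 0"
    and rho: "\<rho> = (\<Sum>k\<in>K. rr k)" and dl: "(\<Sum>k\<in>K. dd k) = - m * (R - \<rho>)"
  shows "fps_nth FY 0 = 0" "fps_nth FZ 0 = 0" "P2 * FY + fps_X * A2 * FZ = fps_X * E2"
    "\<exists>\<epsilon>>0. \<forall>x Y Z. 0 < x \<and> x < \<epsilon> \<and>
        p1 * Y + x * ((R+2)*\<rho> - R^2 * phi x) * Z = x * (-4*R*(R+1)*(R+2)^2*(R+(G-1)*x)*psi x) \<and>
        (R+1)*((R+2) - 2*m*x)*Y + x*(-2*(R+1) + (R+2)*m*x)*Z = x * (4*R*(R+1)*(R+2)*m*(R+(G-1)*x))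
        \<longrightarrow> (\<lambda>n. fps_nth FY n * x^n) sums Y \<and> (\<lambda>n. fps_nth FZ n * x^n) sums Z"
proof -
  have R2: "R + 2 \<noteq> 0" using R by simp
  have p1nz: "p1 \<noteq> 0" using p1 R Rr by simp
  have PHI0: "fps_nth (PHI K rr mm R) 0 = \<rho> / (R+2)" using PHI_0[OF K R2] rho by simp
  have PSI0: "fps_nth (PHI K (\<lambda>k. 2 * dd k / (R+2)) mm R) 0 = -2*m*(R-\<rho>) / (R+2)^2"
    using PHI_0[OF K R2, of "\<lambda>k. 2 * dd k / (R+2)" mm] dl
    by (simp add: sum_divide_distrib[symmetric] sum_distrib_left[symmetric] power2_eq_square)
  have C0: "fps_nth Coef 0 = -4*R*(R+1)^2"
    unfolding Coef_def A1_def A2_def P2_def p1 apply (simp add: PHI0)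
    using R2 by (simp add: field_simps power2_eq_square)
  have C0nz: "fps_nth Coef 0 \<noteq> 0" using C0 R by simp
  have E0: "fps_nth Enum 0 = 0"
    unfolding Enum_def E2_def B1_def P2_def p1 by (simp add: PSI0)
  show FZ0: "fps_nth FZ 0 = 0" unfolding FZ_def using E0 by simp
  show "fps_nth FY 0 = 0" unfolding FY_def by simp
  have ic: "inverse Coef * Coef = 1" using C0nz by (rule inverse_mult_eq_1)
  have "Coef * FZ = Enum * (inverse Coef * Coef)" unfolding FZ_def by (simp only: ac_simps)
  hence CFZ: "Coef * FZ = Enum" by (simp add: ic)
  show "P2 * FY + fps_X * A2 * FZ = fps_X * E2"
  proof -
    have h: "P2*A1*FZ = fps_const p1*A2*FZ - fps_const p1*E2 + P2*B1"
      using CFZ unfolding Coef_def Enum_def by (simp add: algebra_simps)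
    have k: "fps_const (1/p1) * fps_const p1 = 1" using p1nz
      by (simp flip: fps_const_mult)
    have "P2 * FY = fps_const (1/p1) * fps_X * (P2*B1 - P2*A1*FZ)"
      unfolding FY_def by (simp add: algebra_simps)
    also have "\<dots> = (fps_const (1/p1) * fps_const p1) * fps_X * (E2 - A2*FZ)"
      unfolding h by (simp add: algebra_simps)
    also have "\<dots> = fps_X * E2 - fps_X * A2 * FZ" unfolding k by (simp add: algebra_simps)
    finally show ?thesis by simp
  qed
  define a1f where "a1f = (\<lambda>x. (R+2)*\<rho> - R^2 * phi x)"
  define b1f where "b1f = (\<lambda>x. -4*R*(R+1)*(R+2)^2 * (R + (G-1)*x) * psi x)"
  define p2f where "p2f = (\<lambda>x::real. (R+1)*((R+2) - 2*m*x))"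
  define a2f where "a2f = (\<lambda>x::real. -2*(R+1) + (R+2)*m*x)"
  define e2f where "e2f = (\<lambda>x::real. 4*R*(R+1)*(R+2)*m * (R + (G-1)*x))"
  define coeff where "coeff = (\<lambda>x. p1 * a2f x - p2f x * a1f x)"
  define enumf where "enumf = (\<lambda>x. p1 * e2f x - p2f x * b1f x)"
  define fZ where "fZ = (\<lambda>x. enumf x * inverse (coeff x))"
  define fY where "fY = (\<lambda>x. (1/p1) * x * (b1f x - a1f x * fZ x))"
  have phiE: "(\<lambda>x. phi x) has_fps_expansion PHI K rr mm R"
    unfolding phi_def using PHI_exp[OF K R2] by simp
  have psiE: "(\<lambda>x. psi x) has_fps_expansion PHI K (\<lambda>k. 2 * dd k / (R+2)) mm R"
    unfolding psi_def using PHI_exp[OF K R2] by simp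
  have a1E: "a1f has_fps_expansion A1" unfolding a1f_def A1_def
    by (intro has_fps_expansion_diff has_fps_expansion_const has_fps_expansion_cmult_left phiE)
  have b1E: "b1f has_fps_expansion B1" unfolding b1f_def B1_def
    by (intro has_fps_expansion_mult has_fps_expansion_add has_fps_expansion_const
       has_fps_expansion_cmult_left has_fps_expansion_fps_X psiE)
  have p2E: "p2f has_fps_expansion P2" unfolding p2f_def P2_def
    by (intro has_fps_expansion_diff has_fps_expansion_const has_fps_expansion_cmult_left has_fps_expansion_fps_X)
  have a2E: "a2f has_fps_expansion A2" unfolding a2f_def A2_def
    by (intro has_fps_expansion_add has_fps_expansion_const has_fps_expansion_cmult_left has_fps_expansion_fps_X)
  have e2E: "e2f has_fps_expansion E2" unfolding e2f_def E2_def
    by (intro has_fps_expansion_add has_fps_expansion_const has_fps_expansion_cmult_left has_fps_expansion_fps_X)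
  have cE: "coeff has_fps_expansion Coef" unfolding coeff_def Coef_def
    by (intro has_fps_expansion_diff has_fps_expansion_mult has_fps_expansion_cmult_left a1E a2E p2E)
  have nE: "enumf has_fps_expansion Enum" unfolding enumf_def Enum_def
    by (intro has_fps_expansion_diff has_fps_expansion_mult has_fps_expansion_cmult_left b1E e2E p2E)
  have zE: "fZ has_fps_expansion FZ" unfolding fZ_def FZ_def
    by (intro has_fps_expansion_mult has_fps_expansion_inverse nE cE C0nz)
  have yE: "fY has_fps_expansion FY" unfolding fY_def FY_def
    by (intro has_fps_expansion_mult has_fps_expansion_diff has_fps_expansion_cmult_left
       has_fps_expansion_fps_X zE a1E b1E)
  have c0: "coeff 0 \<noteq> 0"
  proof -
    have "eval_fps Coef 0 = coeff 0" using cE unfolding has_fps_expansion_def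
      using eventually_nhds_x_imp_x by blast
    thus ?thesis using C0nz by (simp add: eval_fps_at_0)
  qed
  have "isCont coeff 0" using has_fps_expansion_imp_continuous[OF cE, of UNIV] by simp
  then obtain e where e: "e > 0" "\<And>y. dist 0 y < e \<Longrightarrow> coeff y \<noteq> 0"
    using continuous_at_avoid[of 0 coeff 0] c0 by blast
  have ev1: "eventually (\<lambda>x. coeff x \<noteq> 0) (nhds (0::real))"
    unfolding eventually_nhds_metric using e by (metis dist_commute)
  have ev2: "eventually (\<lambda>x. x \<in> eball 0 (fps_conv_radius FY)) (nhds (0::real))"
    using yE by (intro eventually_nhds_in_open) (auto simp: has_fps_expansion_def zero_ereal_def)
  have ev3: "eventually (\<lambda>x. x \<in> eball 0 (fps_conv_radius FZ)) (nhds (0::real))"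
    using zE by (intro eventually_nhds_in_open) (auto simp: has_fps_expansion_def zero_ereal_def)
  have ev4: "eventually (\<lambda>x. eval_fps FY x = fY x) (nhds (0::real))"
    using yE by (auto simp: has_fps_expansion_def)
  have ev5: "eventually (\<lambda>x. eval_fps FZ x = fZ x) (nhds (0::real))"
    using zE by (auto simp: has_fps_expansion_def)
  have "eventually (\<lambda>x. coeff x \<noteq> 0 \<and> x \<in> eball 0 (fps_conv_radius FY) \<and> x \<in> eball 0 (fps_conv_radius FZ)
       \<and> eval_fps FY x = fY x \<and> eval_fps FZ x = fZ x) (nhds (0::real))"
    using ev1 ev2 ev3 ev4 ev5 by eventually_elim blast
  then obtain \<epsilon> where \<epsilon>: "\<epsilon> > 0" and H: "\<And>x. dist x 0 < \<epsilon> \<Longrightarrow> coeff x \<noteq> 0 \<and> x \<in> eball 0 (fps_conv_radius FY) \<and> x \<in> eball 0 (fps_conv_radius FZ)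
       \<and> eval_fps FY x = fY x \<and> eval_fps FZ x = fZ x"
    unfolding eventually_nhds_metric by blast
  show "\<exists>\<epsilon>>0. \<forall>x Y Z. 0 < x \<and> x < \<epsilon> \<and>
        p1 * Y + x * ((R+2)*\<rho> - R^2 * phi x) * Z = x * (-4*R*(R+1)*(R+2)^2*(R+(G-1)*x)*psi x) \<and>
        (R+1)*((R+2) - 2*m*x)*Y + x*(-2*(R+1) + (R+2)*m*x)*Z = x * (4*R*(R+1)*(R+2)*m*(R+(G-1)*x))
        \<longrightarrow> (\<lambda>n. fps_nth FY n * x^n) sums Y \<and> (\<lambda>n. fps_nth FZ n * x^n) sums Z"
  proof (intro exI[of _ \<epsilon>] conjI allI impI \<epsilon>)
    fix x Y Z :: real
    assume A: "0 < x \<and> x < \<epsilon> \<and>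
        p1 * Y + x * ((R+2)*\<rho> - R^2 * phi x) * Z = x * (-4*R*(R+1)*(R+2)^2*(R+(G-1)*x)*psi x) \<and>
        (R+1)*((R+2) - 2*m*x)*Y + x*(-2*(R+1) + (R+2)*m*x)*Z = x * (4*R*(R+1)*(R+2)*m*(R+(G-1)*x))"
    have Hx: "coeff x \<noteq> 0 \<and> x \<in> eball 0 (fps_conv_radius FY) \<and> x \<in> eball 0 (fps_conv_radius FZ)
       \<and> eval_fps FY x = fY x \<and> eval_fps FZ x = fZ x" using H[of x] A by (simp add: dist_real_def)
    have S1: "p1 * Y + x * a1f x * Z = x * b1f x" using A unfolding a1f_def b1f_def by (simp add: mult.assoc)
    have S2: "p2f x * Y + x * a2f x * Z = x * e2f x" using A unfolding p2f_def a2f_def e2f_def by (simp add: mult.assoc)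
    have "x * (Z * coeff x) = x * enumf x"
    proof -
      have "x * (Z * coeff x) = p1 * (p2f x * Y + x * a2f x * Z) - p2f x * (p1 * Y + x * a1f x * Z)"
        unfolding coeff_def by (simp add: algebra_simps)
      also have "\<dots> = x * enumf x" unfolding S1 S2 enumf_def by (simp add: algebra_simps)
      finally show ?thesis .
    qed
    hence "Z * coeff x = enumf x" using A by simp
    hence Zx: "Z = fZ x" unfolding fZ_def using Hx by (simp add: field_simps)
    have Yx: "Y = fY x" unfolding fY_def using S1 p1nz unfolding Zx[symmetric]
      by (simp add: field_simps)
    have "norm x < fps_conv_radius FY" "norm x < fps_conv_radius FZ"
      using Hx by (auto simp: dist_norm)
    thus "(\<lambda>n. fps_nth FY n * x^n) sums Y" "(\<lambda>n. fps_nth FZ n * x^n) sums Z"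
      using sums_eval_fps Hx Yx Zx by metis+
  qed
qed


lemma analytic_ex:
  fixes R \<rho> m G p1 :: real and K :: "nat set" and rr dd mm :: "nat \<Rightarrow> real"
  assumes K: "finite K" and R: "R > 0" and p1: "p1 = 2*(R+1)*(R-\<rho>)" and Rr: "R - \<rho> > 0"
    and rho: "\<rho> = (\<Sum>k\<in>K. rr k)" and dl: "(\<Sum>k\<in>K. dd k) = - m * (R - \<rho>)"
  shows "\<exists>FY FZ. fps_nth FY 0 = 0 \<and> fps_nth FZ 0 = 0 \<and>
    fps_const (R+1) * (fps_const (R+2) - fps_const (2*m) * fps_X) * FY
      + fps_X * (fps_const (-2*(R+1)) + fps_const ((R+2)*m) * fps_X) * FZ
      = fps_X * (fps_const (4*R*(R+1)*(R+2)*m) * (fps_const R + fps_const (G-1) * fps_X)) \<and>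
    (\<exists>\<epsilon>>0. \<forall>x Y Z. 0 < x \<and> x < \<epsilon> \<and>
        p1 * Y + x * ((R+2)*\<rho> - R^2 * phif K rr mm R x) * Z = x * (-4*R*(R+1)*(R+2)^2*(R+(G-1)*x)*phif K (\<lambda>k. 2 * dd k / (R+2)) mm R x) \<and>
        (R+1)*((R+2) - 2*m*x)*Y + x*(-2*(R+1) + (R+2)*m*x)*Z = x * (4*R*(R+1)*(R+2)*m*(R+(G-1)*x))
        \<longrightarrow> (\<lambda>n. fps_nth FY n * x^n) sums Y \<and> (\<lambda>n. fps_nth FZ n * x^n) sums Z)"
  using analytic[where G=G, OF K R p1 Rr rho dl] by blast

lemma coeffs:
  fixes FY FZ :: "real fps" and R m G :: real
  assumes R: "R > 0" and Y0: "fps_nth FY 0 = 0" and Z0: "fps_nth FZ 0 = 0"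
  and I: "fps_const (R+1) * (fps_const (R+2) - fps_const (2*m) * fps_X) * FY
        + fps_X * (fps_const (-2*(R+1)) + fps_const ((R+2)*m) * fps_X) * FZ
        = fps_X * (fps_const (4*R*(R+1)*(R+2)*m) * (fps_const R + fps_const (G-1) * fps_X))"
  shows "fps_nth FY 1 = 4 * R^2 * m"
    "(R+2) * fps_nth FY 2 - 2*m*fps_nth FY 1 - 2 * fps_nth FZ 1 = 4*(R+2)*(G-1)*R*m"
    "\<And>i. i \<ge> 1 \<Longrightarrow> (R+2) * fps_nth FY (i+2) - 2*m*fps_nth FY (i+1) - 2 * fps_nth FZ (i+1) + (R+2)/(R+1)*m*fps_nth FZ i = 0"
proof -
  have L: "fps_const (R+1) * (fps_const (R+2) - fps_const (2*m) * fps_X) * FY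
        + fps_X * (fps_const (-2*(R+1)) + fps_const ((R+2)*m) * fps_X) * FZ
        = fps_const (R+1) * fps_const (R+2) * FY - fps_const (R+1) * fps_const (2*m) * (fps_X * FY)
          + fps_const (-2*(R+1)) * (fps_X * FZ) + fps_const ((R+2)*m) * (fps_X * (fps_X * FZ))"
    by (simp add: algebra_simps)
  have Rt: "fps_X * (fps_const (4*R*(R+1)*(R+2)*m) * (fps_const R + fps_const (G-1) * fps_X))
     = fps_const (4*R*(R+1)*(R+2)*m) * fps_const R * fps_X + fps_const (4*R*(R+1)*(R+2)*m) * fps_const (G-1) * (fps_X * fps_X)"
    by (simp add: algebra_simps)
  have eq: "\<And>n. fps_nth (fps_const (R+1) * fps_const (R+2) * FY - fps_const (R+1) * fps_const (2*m) * (fps_X * FY)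
          + fps_const (-2*(R+1)) * (fps_X * FZ) + fps_const ((R+2)*m) * (fps_X * (fps_X * FZ))) n
     = fps_nth (fps_const (4*R*(R+1)*(R+2)*m) * fps_const R * fps_X + fps_const (4*R*(R+1)*(R+2)*m) * fps_const (G-1) * (fps_X * fps_X)) n"
    using I unfolding L Rt by simp
  have R1: "R+1 \<noteq> 0" "R+2\<noteq>0" using R by auto
  have h1: "(R+1)*(R+2)*fps_nth FY 1 = 4*R*(R+1)*(R+2)*m*R" using eq[of 1] Y0 Z0 by simp
  have h2: "(R+1)*(R+2)*fps_nth FY 2 - 2*m*(R+1)*fps_nth FY 1 - 2*(R+1)*fps_nth FZ 1 = 4*R*(R+1)*(R+2)*m*(G-1)"
    using eq[of 2] Y0 Z0 by (simp add: numeral_2_eq_2) (simp add: algebra_simps)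
  have h3: "\<And>i. i \<ge> 1 \<Longrightarrow> (R+1)*(R+2)*fps_nth FY (i+2) - 2*m*(R+1)*fps_nth FY (i+1) - 2*(R+1)*fps_nth FZ (i+1) + (R+2)*m*fps_nth FZ i = 0"
  proof -
    fix i :: nat assume "i \<ge> 1"
    thus "(R+1)*(R+2)*fps_nth FY (i+2) - 2*m*(R+1)*fps_nth FY (i+1) - 2*(R+1)*fps_nth FZ (i+1) + (R+2)*m*fps_nth FZ i = 0"
      using eq[of "i+2"] by (simp add: numeral_2_eq_2) (simp add: algebra_simps)
  qed
  show "fps_nth FY 1 = 4 * R^2 * m"
    using h1 R1 by (simp add: power2_eq_square)
  show "(R+2) * fps_nth FY 2 - 2*m*fps_nth FY 1 - 2 * fps_nth FZ 1 = 4*(R+2)*(G-1)*R*m"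
  proof -
    have "(R+1)*((R+2) * fps_nth FY 2 - 2*m*fps_nth FY 1 - 2 * fps_nth FZ 1) = (R+1)*(4*(R+2)*(G-1)*R*m)"
      using h2 by (simp add: algebra_simps)
    thus ?thesis using R1 by simp
  qed
  fix i :: nat assume i1: "i \<ge> 1"
  show "(R+2) * fps_nth FY (i+2) - 2*m*fps_nth FY (i+1) - 2 * fps_nth FZ (i+1) + (R+2)/(R+1)*m*fps_nth FZ i = 0"
  proof -
    have "(R+1)*((R+2) * fps_nth FY (i+2) - 2*m*fps_nth FY (i+1) - 2 * fps_nth FZ (i+1) + (R+2)/(R+1)*m*fps_nth FZ i) = 0"
    proof -
      have k: "(R+1)*((R+2)/(R+1)*m*fps_nth FZ i) = (R+2)*m*fps_nth FZ i" using R1 by simp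
      have "(R+1)*((R+2) * fps_nth FY (i+2) - 2*m*fps_nth FY (i+1) - 2 * fps_nth FZ (i+1) + (R+2)/(R+1)*m*fps_nth FZ i)
        = (R+1)*((R+2) * fps_nth FY (i+2) - 2*m*fps_nth FY (i+1) - 2 * fps_nth FZ (i+1)) + (R+1)*((R+2)/(R+1)*m*fps_nth FZ i)"
        by (simp only: distrib_left)
      also have "\<dots> = 0" unfolding k using h3[OF i1] by (simp add: algebra_simps)
      finally show ?thesis .
    qed
    thus ?thesis using R1 by simp
  qed
qed

lemma alg:
  fixes R \<rho> \<delta> m G c x X Y Z \<psi> \<phi> A B C :: real
  assumes cx: "c*x = 1"
  and E0: "X * c * R * (R+1) + Y * c * (R+1) - Z = 2*R*(R+1)*((R-1)*R*c + 2*(1-G))"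
  and Bd: "B = 2*R*(R+1)*(R+2) - X*(R+2) - Y"
  and Ad: "A = 2*(R+1)*(R+2)*(R*(R-1)*c + 2*(1-G)) - X*(R+2)*(R+1)*c - Y*(R+2)*c + Z"
  and Cd: "2*C = 2*A - B*(R+2)*c"
  and Yeq: "2*c*Y = B*\<rho>*c + 2*C*\<phi>"
  and Zeq: "2*c*Z = B*\<delta>*c + C*(R+2)*\<psi>"
  and phi: "(R+2)*\<phi> = \<rho> + (R+2)*x*\<psi>"
  and dl: "\<delta> = - m*(R-\<rho>)" and Rr: "R - \<rho> \<noteq> 0"
shows "2*(R+1)*(R-\<rho>)*Y + x*((R+2)*\<rho> - R^2*\<phi>)*Z = -4*R*(R+1)*(R+2)^2*(R+(G-1)*x)*\<psi>*x"
  and "(R+1)*((R+2) - 2*m*x)*Y + x*(-2*(R+1) + (R+2)*m*x)*Z = 4*R*(R+1)*(R+2)*m*x*(R+(G-1)*x)"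
proof -
  have s1: "X*c*R*(R+1) = Z + 2*R*(R+1)*((R-1)*R*c + 2*(1-G)) - Y*c*(R+1)"
    using E0 by linarith
  have s2: "B*c*R*(R+1) = 4*R^2*(R+1)*(R+2)*c + 4*R*(R+1)*(R+2)*(G-1) - (R+2)*Z + 2*Y*(R+1)*c"
  proof -
    have "B*c*R*(R+1) = (2*R*(R+1)*(R+2) - Y)*c*R*(R+1) - (R+2)*(X*c*R*(R+1))"
      unfolding Bd by (simp add: algebra_simps)
    also have "\<dots> = 4*R^2*(R+1)*(R+2)*c + 4*R*(R+1)*(R+2)*(G-1) - (R+2)*Z + 2*Y*(R+1)*c"
      unfolding s1 by (simp add: algebra_simps power2_eq_square)
    finally show ?thesis .
  qed
  have s3: "2*C*R*(R+1) = -4*R*(R+1)*(R+2)^2*(R*c+G-1) + Z*R^2"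
  proof -
    have "2*C*R*(R+1) = (2*A - B*(R+2)*c)*R*(R+1)" using Cd by simp
    also have "\<dots> = 2*(2*(R+1)*(R+2)*(R*(R-1)*c + 2*(1-G)) - Y*(R+2)*c + Z)*R*(R+1)
           - 2*(R+2)*(R+1)*(X*c*R*(R+1)) - (R+2)*(B*c*R*(R+1))"
      unfolding Ad by (simp add: algebra_simps)
    also have "\<dots> = -4*R*(R+1)*(R+2)^2*(R*c+G-1) + Z*R^2"
      unfolding s1 s2 by (simp add: algebra_simps power2_eq_square)
    finally show ?thesis .
  qed
  have s4: "2*c*Y*R*(R+1) = \<rho>*(B*c*R*(R+1)) + \<phi>*(2*C*R*(R+1))"
  proof -
    have "(2*c*Y)*(R*(R+1)) = (B*\<rho>*c + 2*C*\<phi>)*(R*(R+1))" by (simp only: Yeq)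
    thus ?thesis by (simp add: algebra_simps)
  qed
  define E where "E = R + (G-1)*x"
  define \<sigma>2 where "\<sigma>2 = 4*R*(R+1)*(R+2)*E - (R+2)*Z*x + 2*Y*(R+1)"
  define \<sigma>3 where "\<sigma>3 = -4*R*(R+1)*(R+2)^2*E + Z*R^2*x"
  have xS2: "x*(4*R^2*(R+1)*(R+2)*c + 4*R*(R+1)*(R+2)*(G-1) - (R+2)*Z + 2*Y*(R+1)*c) = \<sigma>2"
  proof -
    have "x*(4*R^2*(R+1)*(R+2)*c + 4*R*(R+1)*(R+2)*(G-1) - (R+2)*Z + 2*Y*(R+1)*c)
       = \<sigma>2 + (c*x - 1)*(4*R^2*(R+1)*(R+2) + 2*Y*(R+1))"
      unfolding \<sigma>2_def E_def by (simp add: algebra_simps power2_eq_square)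
    thus ?thesis using cx by simp
  qed
  have xS3: "x*(-4*R*(R+1)*(R+2)^2*(R*c+G-1) + Z*R^2) = \<sigma>3"
  proof -
    have "x*(-4*R*(R+1)*(R+2)^2*(R*c+G-1) + Z*R^2) = \<sigma>3 + (c*x - 1)*(-4*R^2*(R+1)*(R+2)^2)"
      unfolding \<sigma>3_def E_def by (simp add: algebra_simps power2_eq_square)
    thus ?thesis using cx by simp
  qed
  have t1: "2*c*Y*R*(R+1) = \<rho>*(4*R^2*(R+1)*(R+2)*c + 4*R*(R+1)*(R+2)*(G-1) - (R+2)*Z + 2*Y*(R+1)*c) + \<phi>*(-4*R*(R+1)*(R+2)^2*(R*c+G-1) + Z*R^2)"
    using s4 s2 s3 by simp
  have t1x: "2*Y*R*(R+1) = \<rho>*\<sigma>2 + \<phi>*\<sigma>3"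
  proof -
    have "x*(2*c*Y*R*(R+1)) = x*(\<rho>*(4*R^2*(R+1)*(R+2)*c + 4*R*(R+1)*(R+2)*(G-1) - (R+2)*Z + 2*Y*(R+1)*c) + \<phi>*(-4*R*(R+1)*(R+2)^2*(R*c+G-1) + Z*R^2))"
      using t1 by simp
    also have "\<dots> = \<rho>*\<sigma>2 + \<phi>*\<sigma>3" unfolding xS2[symmetric] xS3[symmetric] by (simp add: algebra_simps)
    also have "x*(2*c*Y*R*(R+1)) = (c*x)*(2*Y*R*(R+1))" by (simp add: algebra_simps)
    finally show ?thesis using cx by simp
  qed
  have u1: "4*c*Z*R*(R+1) = 2*\<delta>*(4*R^2*(R+1)*(R+2)*c + 4*R*(R+1)*(R+2)*(G-1) - (R+2)*Z + 2*Y*(R+1)*c) + (R+2)*\<psi>*(-4*R*(R+1)*(R+2)^2*(R*c+G-1) + Z*R^2)"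
  proof -
    have "(2*c*Z)*(2*R*(R+1)) = (B*\<delta>*c + C*(R+2)*\<psi>)*(2*R*(R+1))" by (simp only: Zeq)
    also have "\<dots> = 2*\<delta>*(B*c*R*(R+1)) + (R+2)*\<psi>*(2*C*R*(R+1))" by (simp add: algebra_simps)
    finally show ?thesis unfolding s2 s3 by (simp add: algebra_simps)
  qed
  have u1x: "4*Z*R*(R+1) = 2*\<delta>*\<sigma>2 + (R+2)*\<psi>*\<sigma>3"
  proof -
    have "x*(4*c*Z*R*(R+1)) = x*(2*\<delta>*(4*R^2*(R+1)*(R+2)*c + 4*R*(R+1)*(R+2)*(G-1) - (R+2)*Z + 2*Y*(R+1)*c) + (R+2)*\<psi>*(-4*R*(R+1)*(R+2)^2*(R*c+G-1) + Z*R^2))"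
      using u1 by simp
    also have "\<dots> = 2*\<delta>*\<sigma>2 + (R+2)*\<psi>*\<sigma>3" unfolding xS2[symmetric] xS3[symmetric] by (simp add: algebra_simps)
    also have "x*(4*c*Z*R*(R+1)) = (c*x)*(4*Z*R*(R+1))" by (simp add: algebra_simps)
    finally show ?thesis using cx by simp
  qed
  have ps: "(R+2)*x*\<psi> = (R+2)*\<phi> - \<rho>" using phi by simp
  show "2*(R+1)*(R-\<rho>)*Y + x*((R+2)*\<rho> - R^2*\<phi>)*Z = -4*R*(R+1)*(R+2)^2*(R+(G-1)*x)*\<psi>*x"
  proof -
    have "\<phi>*\<sigma>3 = -4*R*(R+1)*(R+2)*E*((R+2)*\<phi>) + \<phi>*Z*R^2*x" unfolding \<sigma>3_def by (simp add: algebra_simps power2_eq_square)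
    also have "\<dots> = -4*R*(R+1)*(R+2)*E*(\<rho> + (R+2)*x*\<psi>) + \<phi>*Z*R^2*x" unfolding phi ..
    finally have h: "\<phi>*\<sigma>3 = -4*R*(R+1)*(R+2)*E*(\<rho> + (R+2)*x*\<psi>) + \<phi>*Z*R^2*x" .
    have "2*Y*R*(R+1) = \<rho>*\<sigma>2 + (-4*R*(R+1)*(R+2)*E*(\<rho> + (R+2)*x*\<psi>) + \<phi>*Z*R^2*x)"
      using t1x unfolding h .
    thus ?thesis unfolding \<sigma>2_def E_def by (simp add: algebra_simps power2_eq_square)
  qed
  show "(R+1)*((R+2) - 2*m*x)*Y + x*(-2*(R+1) + (R+2)*m*x)*Z = 4*R*(R+1)*(R+2)*m*x*(R+(G-1)*x)"
  proof -
    have "4*x*Z*R*(R+1) = x*(4*Z*R*(R+1))" by simp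
    also have "\<dots> = 2*\<delta>*x*\<sigma>2 + ((R+2)*x*\<psi>)*\<sigma>3" unfolding u1x by (simp add: algebra_simps)
    also have "\<dots> = 2*\<delta>*x*\<sigma>2 + (R+2)*(\<phi>*\<sigma>3) - \<rho>*\<sigma>3" unfolding ps by (simp add: algebra_simps)
    also have "\<dots> = 2*\<delta>*x*\<sigma>2 + (R+2)*(2*Y*R*(R+1) - \<rho>*\<sigma>2) - \<rho>*\<sigma>3"
      using t1x by (simp add: algebra_simps)
    finally have Ceq: "4*x*Z*R*(R+1) = 2*\<delta>*x*\<sigma>2 + (R+2)*(2*Y*R*(R+1) - \<rho>*\<sigma>2) - \<rho>*\<sigma>3" .
    have "-2*(R-\<rho>)*((R+1)*((R+2) - 2*m*x)*Y + x*(-2*(R+1) + (R+2)*m*x)*Z - 4*R*(R+1)*(R+2)*m*x*(R+(G-1)*x))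
       = 4*x*Z*R*(R+1) - (2*\<delta>*x*\<sigma>2 + (R+2)*(2*Y*R*(R+1) - \<rho>*\<sigma>2) - \<rho>*\<sigma>3)"
      unfolding \<sigma>2_def \<sigma>3_def E_def dl by (simp add: algebra_simps power2_eq_square)
    also have "\<dots> = 0" using Ceq by simp
    finally show ?thesis using Rr by simp
  qed
qed



lemma alpha2_form:
  assumes dV: "dV l d = 0" and rj: "r j > 0"
  shows "alpha2 l r d c j k = piR l r / fact (rV l r + 2) * real (r k) *
     (real (r j) * (c*(real (rV l r)+2) - mu r d k) - real_of_int (d j)
      + (if j = k then c*(real (rV l r)+2) - 2 * mu r d k else 0))"
proof -
  have h: "real (r j) * mu r d j = real_of_int (d j)" using rj by (simp add: mu_def)
  define Q where "Q = piR l r / fact (rV l r + 2)"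
  show ?thesis
  proof (cases "j = k")
    case True
    show ?thesis using True unfolding alpha2_def dV h[symmetric] Q_def[symmetric] by (simp add: algebra_simps)
  next
    case False
    show ?thesis using False unfolding alpha2_def dV h[symmetric] Q_def[symmetric] by (simp add: algebra_simps)
  qed
qed

lemma sysderiv:
  fixes l :: nat and r :: "nat \<Rightarrow> nat" and d :: "nat \<Rightarrow> int" and g :: int and c :: real and a :: "nat \<Rightarrow> real"
    and R \<rho> m G x Y Z :: real
  assumes hl: "l \<ge> 2" and hr: "\<forall>k\<le>l. r k \<ge> 1" and hdV: "(\<Sum>k\<le>l. d k) = 0" and c: "c > 0"
    and q: "\<forall>k\<in>{2..l}. (real (rV l r) + 2) - 2 * mu r d k * (1/c) \<noteq> 0"
    and sol: "solves_system l r d g c a"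
    and R_def: "R = real (rV l r)" and \<rho>_def: "\<rho> = (\<Sum>k\<in>{2..l}. real (r k))"
    and m_def: "m = real_of_int (d 0 + d 1) / real (r 0 + r 1)" and G_def: "G = real_of_int g"
    and x_def: "x = 1/c" and Y_def: "Y = (\<Sum>j=2..l. a j * real (r j))"
    and Z_def: "Z = (\<Sum>j=2..l. a j * real_of_int (d j))"
  shows "2*(R+1)*(R-\<rho>)*Y + x*((R+2)*\<rho> - R^2*phif {2..l} (\<lambda>k. real (r k)) (mu r d) R x)*Z
         = -4*R*(R+1)*(R+2)^2*(R+(G-1)*x)*phif {2..l} (\<lambda>k. 2*real_of_int (d k)/(R+2)) (mu r d) R x * x"
  and "(R+1)*((R+2) - 2*m*x)*Y + x*(-2*(R+1) + (R+2)*m*x)*Z = 4*R*(R+1)*(R+2)*m*x*(R+(G-1)*x)"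
proof -
  define N where "N = rV l r"
  have R_def: "R = real N" unfolding R_def N_def ..
  define K where "K = {2..l}"
  have \<rho>_def: "\<rho> = (\<Sum>k\<in>K. real (r k))" unfolding K_def \<rho>_def ..
  define \<delta> where "\<delta> = (\<Sum>k\<in>K. real_of_int (d k))"
  define X where "X = a 0"
  define P where "P = piR l r"
  define F where "F = (fact N :: real)"
  have dV: "dV l d = 0" using hdV by (simp add: dV_def)
  have rpos: "\<And>k. k \<in> K \<Longrightarrow> r k > 0" using hr unfolding K_def by force
  have spl: "{..l} = insert 0 (insert 1 K)" unfolding K_def using hl by auto
  have Rsplit: "R = real (r 0) + real (r 1) + \<rho>"
    unfolding R_def N_def rV_def \<rho>_def spl by (simp add: K_def)
  have dsplit: "d 0 + d 1 + (\<Sum>k\<in>K. d k) = 0" using hdV unfolding spl by (simp add: K_def add.assoc)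
  have r0: "r 0 \<ge> 1" using hr hl by auto
  have r1: "r 1 \<ge> 1" using hr hl by auto
  have r01: "real (r 0 + r 1) > 0" using r0 r1 by simp
  have dl: "\<delta> = - m * (R - \<rho>)"
  proof -
    have "R - \<rho> = real (r 0 + r 1)" using Rsplit by simp
    hence "m * (R - \<rho>) = real_of_int (d 0 + d 1)" unfolding m_def using r01 by simp
    moreover have "\<delta> = - real_of_int (d 0 + d 1)" unfolding \<delta>_def using dsplit
      by (metis add.inverse_unique of_int_sum of_int_minus)
    ultimately show ?thesis by simp
  qed
  have rho0: "\<rho> \<ge> 0" unfolding \<rho>_def by (simp add: sum_nonneg)
  have R1: "R \<ge> 2" using Rsplit r0 r1 rho0 by simp
  have Npos: "N \<ge> 1" using R1 unfolding R_def by simp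
  have F0: "F > 0" unfolding F_def by simp
  have P0: "P > 0" unfolding P_def piR_def by (intro prod_pos) simp
  have F1: "fact (N+1) = (R+1) * F" unfolding F_def R_def by (simp add: algebra_simps)
  have F2: "fact (N+2) = (R+2) * (R+1) * F" unfolding F_def R_def
    by (simp add: algebra_simps numeral_2_eq_2)
  have Fm: "F = R * fact (N - 1)" unfolding F_def R_def using Npos
    by (metis Suc_diff_1 fact_Suc less_le_trans of_nat_fact zero_less_one)
  have Rpos: "R > 0" using R1 by simp
  have FR: "F*R > 0" using F0 Rpos by simp
  have FRR: "F*(R*R) > 0" using F0 Rpos by simp
  have nzA: "F + F*R \<noteq> 0" using F0 FR by linarith
  have nzB: "F*(R*R) + (F*2 + F*(R*3)) \<noteq> 0" using F0 FR FRR by linarith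
  have Ek: "a k * ((R+2)*c - 2 * mu r d k) = (2*(R+1)*(R+2)*(R*(R-1)*c + 2*(1-G)) - X*(R+2)*(R+1)*c - Y*(R+2)*c + Z)
            - (2*R*(R+1)*(R+2) - X*(R+2) - Y) * mu r d k" if kK: "k \<in> K" for k
  proof -
    define \<mu> where "\<mu> = mu r d k"
    define rk where "rk = real (r k)"
    have rk0: "rk > 0" using rpos[OF kK] unfolding rk_def by simp
    have sys: "a 0 * alpha1 l r d c k + (\<Sum>j=2..l. a j * alpha2 l r d c j k) = 2 * beta1 l r d g c k"
      using sol kK unfolding solves_system_def K_def by blast
    define Q2 where "Q2 = P / fact (N + 2)"
    have "(\<Sum>j=2..l. a j * alpha2 l r d c j k) = (\<Sum>j\<in>K. Q2*rk*(c*(R+2) - \<mu>)*(a j * real (r j)) - Q2*rk*(a j * real_of_int (d j))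
            + (if j = k then Q2*rk*(c*(R+2) - 2*\<mu>)*a k else 0))"
      unfolding K_def
    proof (intro sum.cong refl)
      fix j assume "j \<in> {2..l}"
      hence rj: "r j > 0" using rpos unfolding K_def by blast
      have af: "alpha2 l r d c j k = Q2 * rk * (real (r j) * (c*(R+2) - \<mu>) - real_of_int (d j) + (if j = k then c*(R+2) - 2*\<mu> else 0))"
        using alpha2_form[of l d r j c k, OF dV rj] unfolding Q2_def P_def N_def R_def rk_def \<mu>_def by simp
      show "a j * alpha2 l r d c j k = Q2*rk*(c*(R+2) - \<mu>)*(a j * real (r j)) - Q2*rk*(a j * real_of_int (d j))
            + (if j = k then Q2*rk*(c*(R+2) - 2*\<mu>)*a k else 0)"
        unfolding af by (cases "j = k") (simp_all add: algebra_simps)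
    qed
    also have "\<dots> = Q2*rk*(c*(R+2) - \<mu>)*Y - Q2*rk*Z + Q2*rk*(c*(R+2) - 2*\<mu>)*a k"
      using kK unfolding Y_def Z_def K_def
      by (simp add: sum.distrib sum_subtractf sum_distrib_left[symmetric])
    finally have S: "(\<Sum>j=2..l. a j * alpha2 l r d c j k) = Q2*rk*(c*(R+2) - \<mu>)*Y - Q2*rk*Z + Q2*rk*(c*(R+2) - 2*\<mu>)*a k" .
    define W where "W = P*rk/((R+2)*(R+1)*F)"
    have W0: "W > 0" unfolding W_def using P0 rk0 F0 Rpos by simp
    have Q2W: "Q2*rk = W" unfolding Q2_def W_def F2 by simp
    have a1: "alpha1 l r d c k = W*(R+2)*(c*(R+1) - \<mu>)"
    proof -
      have "alpha1 l r d c k = P / fact (N+1) * rk * (c*(R+1) - \<mu>)"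
        unfolding alpha1_def dV P_def N_def R_def rk_def \<mu>_def by simp
      also have "\<dots> = W*(R+2)*(c*(R+1) - \<mu>)" unfolding F1 W_def using Rpos F0 nzA nzB by (simp add: field_simps)
      finally show ?thesis .
    qed
    have b1: "beta1 l r d g c k = W*(R+2)*(R+1)*(R*(R-1)*c + 2*(1-G) - R*\<mu>)"
    proof -
      have "beta1 l r d g c k = P * rk / F * (R*(R-1)*c + 2*(1-G) - R*\<mu>)"
        unfolding beta1_def dV P_def N_def R_def rk_def \<mu>_def F_def G_def by simp
      also have "\<dots> = W*(R+2)*(R+1)*(R*(R-1)*c + 2*(1-G) - R*\<mu>)" unfolding W_def using Rpos F0 nzA nzB by (simp add: field_simps)
      finally show ?thesis .
    qed
    have "W * (X*(R+2)*(c*(R+1) - \<mu>) + (c*(R+2) - \<mu>)*Y - Z + (c*(R+2) - 2*\<mu>)*a k)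
        = W * (2*(R+2)*(R+1)*(R*(R-1)*c + 2*(1-G) - R*\<mu>))"
      using sys unfolding S a1 b1 Q2W X_def[symmetric] by (simp add: algebra_simps)
    hence EN: "X*(R+2)*(c*(R+1) - \<mu>) + (c*(R+2) - \<mu>)*Y - Z + (c*(R+2) - 2*\<mu>)*a k
        = 2*(R+2)*(R+1)*(R*(R-1)*c + 2*(1-G) - R*\<mu>)" using W0 by simp
    show ?thesis using EN unfolding \<mu>_def[symmetric] by (simp add: algebra_simps) 
  qed
  have E0: "X * c * R * (R+1) + Y * c * (R+1) - Z = 2*R*(R+1)*((R-1)*R*c + 2*(1-G))"
  proof -
    have sys: "a 0 * alpha0 l r d c + (\<Sum>j=2..l. a j * alpha1 l r d c j) = 2 * beta0 l r d g c"
      using sol unfolding solves_system_def by blast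
    define W where "W = P/((R+1)*F)"
    have W0: "W > 0" unfolding W_def using P0 F0 Rpos by simp
    have a0: "alpha0 l r d c = W*(R+1)*c*R"
    proof -
      have "alpha0 l r d c = P / F * (c*R)" unfolding alpha0_def dV P_def F_def R_def N_def by simp
      also have "\<dots> = W*(R+1)*c*R" unfolding W_def using Rpos F0 nzA by (simp add: field_simps)
      finally show ?thesis .
    qed
    have a1s: "(\<Sum>j=2..l. a j * alpha1 l r d c j) = W*(c*(R+1)*Y - Z)"
    proof -
      have "(\<Sum>j=2..l. a j * alpha1 l r d c j) = (\<Sum>j=2..l. W*(c*(R+1))*(a j * real (r j)) - W*(a j * real_of_int (d j)))"
      proof (intro sum.cong refl)
        fix j assume "j \<in> {2..l}"
        hence rj: "r j > 0" using rpos unfolding K_def by blast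
        have h: "real (r j) * mu r d j = real_of_int (d j)" using rj by (simp add: mu_def)
        have "alpha1 l r d c j = P / fact (N+1) * real (r j) * (c*(R+1) - mu r d j)"
          unfolding alpha1_def dV P_def N_def R_def by simp
        also have "\<dots> = W*(real (r j)*c*(R+1) - real (r j) * mu r d j)" unfolding F1 W_def
          using Rpos F0 nzA by (simp add: field_simps)
        finally have al: "alpha1 l r d c j = W*(real (r j)*c*(R+1) - real_of_int (d j))" unfolding h .
        show "a j * alpha1 l r d c j = W*(c*(R+1))*(a j * real (r j)) - W*(a j * real_of_int (d j))"
          unfolding al by (simp add: algebra_simps)
      qed
      also have "\<dots> = W*(c*(R+1))*Y - W*Z" unfolding Y_def Z_def
        by (simp only: sum_subtractf sum_distrib_left[symmetric])
      also have "\<dots> = W*(c*(R+1)*Y - Z)" by (simp add: algebra_simps)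
      finally show ?thesis .
    qed
    have b0: "beta0 l r d g c = W*R*(R+1)*((R-1)*R*c + 2*(1-G))"
    proof -
      have fm: "fact (N-1) = F / R" using Fm Rpos by simp
      have "beta0 l r d g c = P / fact (N-1) * ((R-1)*R*c + 2*(1-G))"
        unfolding beta0_def dV P_def R_def N_def G_def by simp
      also have "\<dots> = W*R*(R+1)*((R-1)*R*c + 2*(1-G))" unfolding W_def fm
        using Rpos F0 nzA by (simp add: field_simps)
      finally show ?thesis .
    qed
    have "W * (X * c * R * (R+1) + Y * c * (R+1) - Z) = W * (2*R*(R+1)*((R-1)*R*c + 2*(1-G)))"
      using sys unfolding a0 a1s b0 X_def[symmetric] by (simp add: algebra_simps)
    thus ?thesis using W0 by simp
  qed
  define A where "A = 2*(R+1)*(R+2)*(R*(R-1)*c + 2*(1-G)) - X*(R+2)*(R+1)*c - Y*(R+2)*c + Z"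
  define B where "B = 2*R*(R+1)*(R+2) - X*(R+2) - Y"
  define C where "C = A - B*(R+2)*c/2"
  define qq where "qq = (\<lambda>k. (R+2) - 2 * mu r d k * x)"
  have cx: "c * x = 1" unfolding x_def using c by simp
  have pt: "2*c*a k = B*c + 2*C*inverse (qq k)" if kK: "k \<in> K" for k
  proof -
    have qnz: "qq k \<noteq> 0" using q kK unfolding qq_def K_def R_def N_def x_def by blast
    have e1: "a k * (c * qq k) = A - B * mu r d k"
    proof -
      have "c * qq k = (R+2)*c - 2 * mu r d k" unfolding qq_def using cx by (simp add: algebra_simps)
      thus ?thesis using Ek[OF kK] unfolding A_def B_def by simp
    qed
    have "(B*c + 2*C*inverse (qq k)) * qq k = B*c*qq k + 2*C" using qnz by (simp add: field_simps)
    also have "\<dots> = 2*(A - B * mu r d k)"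
    proof -
      have "B*c*qq k = B*(R+2)*c - 2*B*mu r d k*(c*x)" unfolding qq_def by (simp add: algebra_simps)
      thus ?thesis unfolding C_def cx by simp
    qed
    also have "\<dots> = 2*(a k * (c * qq k))" unfolding e1 ..
    finally have "(B*c + 2*C*inverse (qq k)) * qq k = (2*c*a k) * qq k" by (simp add: algebra_simps)
    thus ?thesis using qnz by simp
  qed
  define \<phi> where "\<phi> = phif {2..l} (\<lambda>k. real (r k)) (mu r d) R x"
  define \<psi> where "\<psi> = phif {2..l} (\<lambda>k. 2*real_of_int (d k)/(R+2)) (mu r d) R x"
  have phiK: "\<phi> = (\<Sum>k\<in>K. real (r k) * inverse (qq k))" unfolding \<phi>_def phif_def qq_def K_def ..
  have psiK: "\<psi> = (\<Sum>k\<in>K. 2*real_of_int (d k)/(R+2) * inverse (qq k))" unfolding \<psi>_def phif_def qq_def K_def ..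
  have Yeq: "2*c*Y = B*\<rho>*c + 2*C*\<phi>"
  proof -
    have "2*c*Y = (\<Sum>k\<in>K. real (r k) * (2*c*a k))" unfolding Y_def K_def sum_distrib_left
      by (intro sum.cong refl) (simp add: algebra_simps)
    also have "\<dots> = (\<Sum>k\<in>K. B*c*real (r k) + 2*C*(real (r k) * inverse (qq k)))"
    proof (intro sum.cong refl)
      fix k assume "k \<in> K"
      show "real (r k) * (2*c*a k) = B*c*real (r k) + 2*C*(real (r k) * inverse (qq k))"
        unfolding pt[OF \<open>k \<in> K\<close>] by (simp add: algebra_simps)
    qed
    also have "\<dots> = B*c*(\<Sum>k\<in>K. real (r k)) + 2*C*(\<Sum>k\<in>K. real (r k) * inverse (qq k))"
      by (simp only: sum.distrib sum_distrib_left[symmetric])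
    also have "\<dots> = B*\<rho>*c + 2*C*\<phi>" unfolding phiK \<rho>_def by (simp add: algebra_simps)
    finally show ?thesis .
  qed
  have R2: "R + 2 \<noteq> 0" using Rpos by simp
  have Zeq: "2*c*Z = B*\<delta>*c + C*(R+2)*\<psi>"
  proof -
    have "2*c*Z = (\<Sum>k\<in>K. real_of_int (d k) * (2*c*a k))" unfolding Z_def K_def sum_distrib_left
      by (intro sum.cong refl) (simp add: algebra_simps)
    also have "\<dots> = (\<Sum>k\<in>K. B*c*real_of_int (d k) + C*(R+2)*(2*real_of_int (d k)/(R+2) * inverse (qq k)))"
    proof (intro sum.cong refl)
      fix k assume "k \<in> K"
      show "real_of_int (d k) * (2*c*a k) = B*c*real_of_int (d k) + C*(R+2)*(2*real_of_int (d k)/(R+2) * inverse (qq k))"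
      proof -
        have qnz: "qq k \<noteq> 0" using q \<open>k \<in> K\<close> unfolding qq_def K_def R_def N_def x_def by blast
        have e: "\<And>iq. C*(R+2)*(2*real_of_int (d k)/(R+2)*iq) = 2*C*(real_of_int (d k)*iq)"
          using R2 by (simp add: field_simps)
        show ?thesis unfolding pt[OF \<open>k \<in> K\<close>] e by (simp add: algebra_simps)
      qed
    qed
    also have "\<dots> = B*c*(\<Sum>k\<in>K. real_of_int (d k)) + C*(R+2)*(\<Sum>k\<in>K. 2*real_of_int (d k)/(R+2) * inverse (qq k))"
      by (simp only: sum.distrib sum_distrib_left[symmetric])
    also have "\<dots> = B*\<delta>*c + C*(R+2)*\<psi>" unfolding psiK \<delta>_def by (simp add: algebra_simps)
    finally show ?thesis .
  qed
  have phi: "(R+2)*\<phi> = \<rho> + (R+2)*x*\<psi>"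
  proof -
    have "(R+2)*\<phi> = (\<Sum>k\<in>K. real (r k) + (R+2)*x*(2*real_of_int (d k)/(R+2) * inverse (qq k)))"
      unfolding phiK sum_distrib_left
    proof (intro sum.cong refl)
      fix k assume kK: "k \<in> K"
      have qnz: "qq k \<noteq> 0" using q kK unfolding qq_def K_def R_def N_def x_def by blast
      have h: "real (r k) * mu r d k = real_of_int (d k)" using rpos[OF kK] by (simp add: mu_def)
      show "(R+2) * (real (r k) * inverse (qq k)) = real (r k) + (R+2)*x*(2*real_of_int (d k)/(R+2) * inverse (qq k))"
      proof -
        have e2': "\<And>iq. (R+2)*x*(2*real_of_int (d k)/(R+2) * iq) = 2*x*real_of_int (d k)*iq"
          using R2 by (simp add: field_simps)
        have e2: "(R+2)*x*(2*real_of_int (d k)/(R+2) * inverse (qq k)) = 2*x*(real (r k) * mu r d k)*inverse (qq k)"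
          unfolding e2' h ..
        have "real (r k) + 2*x*(real (r k) * mu r d k)*inverse (qq k) = (real (r k)*qq k + 2*x*(real (r k) * mu r d k))*inverse (qq k)"
          using qnz by (simp add: field_simps)
        also have "\<dots> = (R+2) * (real (r k) * inverse (qq k))" unfolding qq_def by (simp add: algebra_simps)
        finally show ?thesis unfolding e2 by simp
      qed
    qed
    also have "\<dots> = \<rho> + (R+2)*x*\<psi>" unfolding psiK \<rho>_def
      by (simp only: sum.distrib sum_distrib_left[symmetric])
    finally show ?thesis .
  qed
  have Rr: "R - \<rho> \<noteq> 0" using Rsplit r0 r1 by simp
  note res = alg[OF cx E0 B_def A_def _ Yeq Zeq phi dl Rr]
  have Cd: "2*C = 2*A - B*(R+2)*c" unfolding C_def by simp
  show "2*(R+1)*(R-\<rho>)*Y + x*((R+2)*\<rho> - R^2*phif {2..l} (\<lambda>k. real (r k)) (mu r d) R x)*Z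
         = -4*R*(R+1)*(R+2)^2*(R+(G-1)*x)*phif {2..l} (\<lambda>k. 2*real_of_int (d k)/(R+2)) (mu r d) R x * x"
    using res(1)[OF Cd] unfolding \<phi>_def \<psi>_def .
  show "(R+1)*((R+2) - 2*m*x)*Y + x*(-2*(R+1) + (R+2)*m*x)*Z = 4*R*(R+1)*(R+2)*m*x*(R+(G-1)*x)"
    using res(2)[OF Cd] .
qed

theorem lemma3p17:
  fixes l :: nat and r :: "nat \<Rightarrow> nat" and d :: "nat \<Rightarrow> int" and g :: int
    and a :: "real \<Rightarrow> nat \<Rightarrow> real"
  assumes hl: "l \<ge> 2"
    and hr: "\<forall>k\<le>l. r k \<ge> 1"
    and hdV: "(\<Sum>k\<le>l. d k) = 0"
    and hg: "g \<ge> 1"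
    and hsol: "\<forall>c::real. (\<forall>k\<le>l. mu r d k < c) \<longrightarrow> solves_system l r d g c (a c)"
  shows "\<exists>u v :: nat \<Rightarrow> real.
     (\<forall>\<^sub>F c in at_top.
        (\<lambda>i. u (i + 1) / c ^ (i + 1)) sums (\<Sum>j=2..l. a c j * real (r j)) \<and>
        (\<lambda>i. v (i + 1) / c ^ (i + 1)) sums (\<Sum>j=2..l. a c j * real_of_int (d j))) \<and>
     (let rv = real (rV l r);
          m01 = real_of_int (d 0 + d 1) / real (r 0 + r 1) in
       u 1 = 4 * rv ^ 2 * m01 \<and>
       (rv + 2) * u 2 - 2 * m01 * u 1 - 2 * v 1
          = 4 * (rv + 2) * (real_of_int g - 1) * rv * m01 \<and>
       (\<forall>i\<ge>1. (rv + 2) * u (i + 2) - 2 * m01 * u (i + 1) - 2 * v (i + 1)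
                 + (rv + 2) / (rv + 1) * m01 * v i = 0))"
  proof -
  define R where "R = real (rV l r)"
  define K where "K = {2..l}"
  define \<rho> where "\<rho> = (\<Sum>k\<in>K. real (r k))"
  define m where "m = real_of_int (d 0 + d 1) / real (r 0 + r 1)"
  define G where "G = real_of_int g"
  define p1 where "p1 = 2*(R+1)*(R-\<rho>)"
  have r0: "r 0 \<ge> 1" using hr hl by auto
  have r1: "r 1 \<ge> 1" using hr hl by auto
  have spl: "{..l} = insert 0 (insert 1 K)" unfolding K_def using hl by auto
  have Rsplit: "R = real (r 0) + real (r 1) + \<rho>"
    unfolding R_def rV_def \<rho>_def spl by (simp add: K_def)
  have rho0: "\<rho> \<ge> 0" unfolding \<rho>_def by (simp add: sum_nonneg)
  have Rr: "R - \<rho> > 0" using Rsplit r0 r1 by simp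
  have Rpos: "R > 0" using Rr rho0 by simp
  have dsplit: "d 0 + d 1 + (\<Sum>k\<in>K. d k) = 0" using hdV unfolding spl by (simp add: K_def add.assoc)
  have dl: "(\<Sum>k\<in>K. real_of_int (d k)) = - m * (R - \<rho>)"
  proof -
    have "R - \<rho> = real (r 0 + r 1)" using Rsplit by simp
    hence "m * (R - \<rho>) = real_of_int (d 0 + d 1)" unfolding m_def using r0 r1 by simp
    moreover have "(\<Sum>k\<in>K. real_of_int (d k)) = - real_of_int (d 0 + d 1)" using dsplit
      by (metis add.inverse_unique of_int_sum of_int_minus)
    ultimately show ?thesis by simp
  qed
  have fK: "finite K" unfolding K_def by simp
  obtain FY FZ where Y0: "fps_nth FY 0 = 0" and Z0: "fps_nth FZ 0 = 0"
    and ident: "fps_const (R+1) * (fps_const (R+2) - fps_const (2*m) * fps_X) * FY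
      + fps_X * (fps_const (-2*(R+1)) + fps_const ((R+2)*m) * fps_X) * FZ
      = fps_X * (fps_const (4*R*(R+1)*(R+2)*m) * (fps_const R + fps_const (G-1) * fps_X))"
    and epsex: "\<exists>\<epsilon>>0. \<forall>x Y Z. 0 < x \<and> x < \<epsilon> \<and>
        p1 * Y + x * ((R+2)*\<rho> - R^2 * phif K (\<lambda>k. real (r k)) (mu r d) R x) * Z = x * (-4*R*(R+1)*(R+2)^2*(R+(G-1)*x)*phif K (\<lambda>k. 2 * real_of_int (d k) / (R+2)) (mu r d) R x) \<and>
        (R+1)*((R+2) - 2*m*x)*Y + x*(-2*(R+1) + (R+2)*m*x)*Z = x * (4*R*(R+1)*(R+2)*m*(R+(G-1)*x))
        \<longrightarrow> (\<lambda>n. fps_nth FY n * x^n) sums Y \<and> (\<lambda>n. fps_nth FZ n * x^n) sums Z"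
    using analytic_ex[OF fK Rpos p1_def Rr \<rho>_def dl, where G=G and mm="mu r d"] by blast
  obtain \<epsilon> where \<epsilon>: "\<epsilon> > 0" and H: "\<And>x Y Z. 0 < x \<and> x < \<epsilon> \<and>
        p1 * Y + x * ((R+2)*\<rho> - R^2 * phif K (\<lambda>k. real (r k)) (mu r d) R x) * Z = x * (-4*R*(R+1)*(R+2)^2*(R+(G-1)*x)*phif K (\<lambda>k. 2 * real_of_int (d k) / (R+2)) (mu r d) R x) \<and>
        (R+1)*((R+2) - 2*m*x)*Y + x*(-2*(R+1) + (R+2)*m*x)*Z = x * (4*R*(R+1)*(R+2)*m*(R+(G-1)*x))
        \<Longrightarrow> (\<lambda>n. fps_nth FY n * x^n) sums Y \<and> (\<lambda>n. fps_nth FZ n * x^n) sums Z"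
    using epsex by blast
  note cf = coeffs[OF Rpos Y0 Z0 ident]
  define M where "M = (\<Sum>k\<le>l. \<bar>mu r d k\<bar>) + 1"
  have Mk: "\<And>k. k \<le> l \<Longrightarrow> \<bar>mu r d k\<bar> < M"
  proof -
    fix k assume "k \<le> l"
    hence "\<bar>mu r d k\<bar> \<le> (\<Sum>k\<le>l. \<bar>mu r d k\<bar>)"
      by (intro member_le_sum) auto
    thus "\<bar>mu r d k\<bar> < M" unfolding M_def by simp
  qed
  have M0: "M > 0" using Mk[of 0] by simp
  define c0 where "c0 = max (2*M) (1/\<epsilon>)"
  have ev: "\<forall>\<^sub>F c in at_top.
        (\<lambda>i. fps_nth FY (i + 1) / c ^ (i + 1)) sums (\<Sum>j=2..l. a c j * real (r j)) \<and>
        (\<lambda>i. fps_nth FZ (i + 1) / c ^ (i + 1)) sums (\<Sum>j=2..l. a c j * real_of_int (d j))"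
    using eventually_gt_at_top[of c0]
  proof eventually_elim
    case (elim c)
    have c2M: "c > 2*M" and cep: "c > 1/\<epsilon>" using elim unfolding c0_def by auto
    have cpos: "c > 0" using c2M M0 by simp
    define x where "x = 1/c"
    have x0: "x > 0" unfolding x_def using cpos by simp
    have xe: "x < \<epsilon>" unfolding x_def using cep cpos \<epsilon> by (simp add: field_simps)
    have muc: "\<forall>k\<le>l. mu r d k < c"
    proof (intro allI impI)
      fix k assume "k \<le> l"
      hence "\<bar>mu r d k\<bar> < M" by (rule Mk)
      hence "mu r d k < M" by (simp add: abs_less_iff)
      thus "mu r d k < c" using c2M M0 by linarith
    qed
    have q: "\<forall>k\<in>{2..l}. (real (rV l r) + 2) - 2 * mu r d k * (1/c) \<noteq> 0"
    proof
      fix k assume "k \<in> {2..l}"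
      hence "\<bar>mu r d k\<bar> < M" using Mk by simp
      hence "\<bar>2 * mu r d k\<bar> < c" using c2M by simp
      hence "\<bar>2 * mu r d k * (1/c)\<bar> < 1" using cpos by (simp add: abs_mult field_simps)
      hence "2 * mu r d k * (1/c) < 1" by (simp only: abs_less_iff)
      moreover have "real (rV l r) + 2 \<ge> 2" by simp
      ultimately show "(real (rV l r) + 2) - 2 * mu r d k * (1/c) \<noteq> 0" by linarith
    qed
    have sol: "solves_system l r d g c (a c)" using hsol muc by blast
    note sd = sysderiv[OF hl hr hdV cpos q sol R_def refl m_def G_def x_def refl refl]
    define Y where "Y = (\<Sum>j=2..l. a c j * real (r j))"
    define Z where "Z = (\<Sum>j=2..l. a c j * real_of_int (d j))"
    have e1: "p1 * Y + x * ((R+2)*\<rho> - R^2 * phif K (\<lambda>k. real (r k)) (mu r d) R x) * Z = x * (-4*R*(R+1)*(R+2)^2*(R+(G-1)*x)*phif K (\<lambda>k. 2 * real_of_int (d k) / (R+2)) (mu r d) R x)"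
      using sd(1) unfolding p1_def Y_def Z_def K_def \<rho>_def by (simp add: algebra_simps)
    have e2: "(R+1)*((R+2) - 2*m*x)*Y + x*(-2*(R+1) + (R+2)*m*x)*Z = x * (4*R*(R+1)*(R+2)*m*(R+(G-1)*x))"
      using sd(2) unfolding Y_def Z_def by (simp add: algebra_simps)
    have S: "(\<lambda>n. fps_nth FY n * x^n) sums Y" "(\<lambda>n. fps_nth FZ n * x^n) sums Z"
      using H[OF conjI[OF x0 conjI[OF xe conjI[OF e1 e2]]]] by auto
    have conv: "\<And>(F::real fps) (s::real). fps_nth F 0 = 0 \<Longrightarrow> (\<lambda>n. fps_nth F n * x^n) sums s \<Longrightarrow> (\<lambda>i. fps_nth F (i + 1) / c ^ (i + 1)) sums s"
    proof -
      fix F :: "real fps" and s :: real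
      assume F0: "fps_nth F 0 = 0" and sF: "(\<lambda>n. fps_nth F n * x^n) sums s"
      have "(\<lambda>n. fps_nth F (Suc n) * x^(Suc n)) sums s" using sF F0 by (subst sums_Suc_iff) simp
      moreover have "(\<lambda>n. fps_nth F (Suc n) * x^(Suc n)) = (\<lambda>i. fps_nth F (i + 1) / c ^ (i + 1))"
        unfolding x_def by (simp add: power_one_over field_simps)
      ultimately show "(\<lambda>i. fps_nth F (i + 1) / c ^ (i + 1)) sums s" by simp
    qed
    show ?case using conv[OF Y0 S(1)] conv[OF Z0 S(2)] unfolding Y_def Z_def by simp
  qed
  show ?thesis
    apply (rule exI[of _ "\<lambda>n. fps_nth FY n"], rule exI[of _ "\<lambda>n. fps_nth FZ n"], rule conjI)
    subgoal using ev by simp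
    subgoal unfolding Let_def R_def[symmetric] m_def[symmetric] G_def[symmetric] using cf by simp
    done
qed


end
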